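(* For all $Y,Z\in\mathbb{N}^\mathbb{N}$, the following are equivalent: (1) $Y=\mathcal{J}(Z)$; (2) for every $n$ there exists a finite string $\sigma_n\subset Z$ with $|\sigma_n|>n$ such that $Y\restriction n=J(\sigma_n)$.
   Context: Finite strings of natural numbers are coded by natural numbers via a fixed computable coding in which $\sigma\subsetneq\tau$ implies that the code of $\sigma$ is less than that of $\tau$; thus strings may be entries of other strings. For $\sigma$ a finite or infinite sequence, $\{e\}^\sigma_t(n)\downarrow$ means the $e$-th Turing machine on input $n$ with oracle $\sigma$ halts in fewer than $\min(|\sigma|,t)$ steps ($|\sigma|=\infty$ for infinite $\sigma$). For $Z\in\mathbb{N}^\mathbb{N}$, set $t_{-1}=1$ and $t_n=\max\{t_{n-1}+1,\ \mu t(\{n\}^Z_t(n)\downarrow)\}$, where $t_n=t_{n-1}+1$ if no such $t$ exists; then $\mathcal{J}(Z)\in\mathbb{N}^\mathbb{N}$ is defined by $\mathcal{J}(Z)(n)=Z\restriction t_n$. For a finite string $\sigma$, set $t_{-1}=1$ and $t_n=\max\{t_{n-1}+1,\ \mu t(\{n\}^{\sigma\restriction t}(n)\downarrow)\}$ (with $t_n=t_{n-1}+1$ if no such $t$), where $\{n\}^{\tau}(n)\downarrow$ means halting in fewer than $|\tau|$ steps and $\sigma\restriction t$ is the initial segment of length $\min(t,|\sigma|)$; then $J(\sigma)=\langle\sigma\restriction t_0,\dots,\sigma\restriction t_{k-1}\rangle$ where $k$ is least with $t_k>|\sigma|$. $Y\restriction n$ denotes the initial segment of $Y$ of length $n$.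 *)

theory Defs
  imports Main "HOL-Library.Nat_Bijection"
begin

text \<open>Strings are lists. The code of a string is list_encode of its reversal, so a
proper extension has a strictly larger code (prod_encode (a,b) is at least b).\<close>

definition str_code :: "nat list \<Rightarrow> nat" where
  "str_code s = list_encode (rev s)"

definition init_seg :: "(nat \<Rightarrow> nat) \<Rightarrow> nat \<Rightarrow> nat list" where
  "init_seg Z n = map Z [0..<n]"

definition is_prefix_of :: "nat list \<Rightarrow> (nat \<Rightarrow> nat) \<Rightarrow> bool" where
  "is_prefix_of s Z \<longleftrightarrow> (\<forall>i < length s. s ! i = Z i)"

text \<open>A concrete machine model: register machines with a one-way-readable oracle tape
whose head moves one cell per step (so a computation of fewer than t steps only
inspects oracle cells below t).  Reading an oracle cell that does not exist (beyond
a finite oracle) makes the computation get stuck (never halts).\<close>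

datatype instr = Inc nat | Dec nat | Jz nat nat | OLeft | ORight | ORead nat

type_synonym config = "nat \<times> (nat \<Rightarrow> nat) \<times> nat"  (* pc, registers, oracle head *)

definition decode_instr :: "nat \<Rightarrow> instr" where
  "decode_instr k = (let q = k div 6 in
     (case k mod 6 of
        0 \<Rightarrow> Inc q
      | Suc 0 \<Rightarrow> Dec q
      | Suc (Suc 0) \<Rightarrow> Jz (fst (prod_decode q)) (snd (prod_decode q))
      | Suc (Suc (Suc 0)) \<Rightarrow> OLeft
      | Suc (Suc (Suc (Suc 0))) \<Rightarrow> ORight
      | _ \<Rightarrow> ORead q))"

definition prog :: "nat \<Rightarrow> instr list" where
  "prog e = map decode_instr (list_decode e)"

definition halted :: "instr list \<Rightarrow> config \<Rightarrow> bool" where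
  "halted p c \<longleftrightarrow> fst c \<ge> length p"

fun exec :: "instr \<Rightarrow> (nat \<Rightarrow> nat option) \<Rightarrow> config \<Rightarrow> config option" where
  "exec (Inc r) orc (pc, R, h) = Some (Suc pc, R(r := Suc (R r)), h)"
| "exec (Dec r) orc (pc, R, h) = Some (Suc pc, R(r := R r - 1), h)"
| "exec (Jz r l) orc (pc, R, h) = Some (if R r = 0 then l else Suc pc, R, h)"
| "exec OLeft orc (pc, R, h) = Some (Suc pc, R, h - 1)"
| "exec ORight orc (pc, R, h) = Some (Suc pc, R, Suc h)"
| "exec (ORead r) orc (pc, R, h) =
     (case orc h of None \<Rightarrow> None | Some v \<Rightarrow> Some (Suc pc, R(r := v), h))"

definition step :: "instr list \<Rightarrow> (nat \<Rightarrow> nat option) \<Rightarrow> config \<Rightarrow> config option" where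
  "step p orc c = (if halted p c then Some c else exec (p ! fst c) orc c)"

fun run :: "instr list \<Rightarrow> (nat \<Rightarrow> nat option) \<Rightarrow> nat \<Rightarrow> nat \<Rightarrow> config option" where
  "run p orc x 0 = Some (0, (\<lambda>r. if r = 0 then x else 0), 0)"
| "run p orc x (Suc k) = (case run p orc x k of None \<Rightarrow> None | Some c \<Rightarrow> step p orc c)"

definition halts_lt :: "nat \<Rightarrow> (nat \<Rightarrow> nat option) \<Rightarrow> nat \<Rightarrow> nat \<Rightarrow> bool" where
  "halts_lt e orc x s \<longleftrightarrow> (\<exists>k < s. \<exists>c. run (prog e) orc x k = Some c \<and> halted (prog e) c)"

definition inf_oracle :: "(nat \<Rightarrow> nat) \<Rightarrow> nat \<Rightarrow> nat option" where
  "inf_oracle Z = (\<lambda>h. Some (Z h))"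

definition fin_oracle :: "nat list \<Rightarrow> nat \<Rightarrow> nat option" where
  "fin_oracle s = (\<lambda>h. if h < length s then Some (s ! h) else None)"

definition halts_inf :: "nat \<Rightarrow> (nat \<Rightarrow> nat) \<Rightarrow> nat \<Rightarrow> nat \<Rightarrow> bool" where
  "halts_inf e Z t x \<longleftrightarrow> halts_lt e (inf_oracle Z) x t"

definition halts_fin :: "nat \<Rightarrow> nat list \<Rightarrow> nat \<Rightarrow> bool" where
  "halts_fin e s x \<longleftrightarrow> halts_lt e (fin_oracle s) x (length s)"

text \<open>tseq P 0 = t_{-1} = 1 and tseq P (Suc n) = t_n, where P n t says that the n-th
machine on input n halts at stage t.\<close>
fun tseq :: "(nat \<Rightarrow> nat \<Rightarrow> bool) \<Rightarrow> nat \<Rightarrow> nat" where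
  "tseq P 0 = 1"
| "tseq P (Suc n) = (if \<exists>t. P n t then max (tseq P n + 1) (LEAST t. P n t) else tseq P n + 1)"

definition tZ :: "(nat \<Rightarrow> nat) \<Rightarrow> nat \<Rightarrow> nat" where
  "tZ Z n = tseq (\<lambda>m t. halts_inf m Z t m) (Suc n)"

definition JJ :: "(nat \<Rightarrow> nat) \<Rightarrow> nat \<Rightarrow> nat" where
  "JJ Z n = str_code (init_seg Z (tZ Z n))"

definition tS :: "nat list \<Rightarrow> nat \<Rightarrow> nat" where
  "tS s n = tseq (\<lambda>m t. halts_fin m (take t s) m) (Suc n)"

definition Jfin :: "nat list \<Rightarrow> nat list" where
  "Jfin s = (let k = (LEAST k. tS s k > length s) in
             map (\<lambda>i. str_code (take (tS s i) s)) [0..<k])"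

end

theory Submission
  imports Defs
begin

lemma run_head: "run p orc x k = Some (pc, R, h) \<Longrightarrow> h \<le> k"
proof (induction k arbitrary: pc R h)
  case 0 then show ?case by simp
next
  case (Suc k)
  from Suc.prems obtain c where c: "run p orc x k = Some c" and s: "step p orc c = Some (pc, R, h)"
    by (auto split: option.splits)
  obtain pc' R' h' where cc: "c = (pc', R', h')" by (cases c)
  have "h' \<le> k" using Suc.IH c cc by simp
  moreover have "h \<le> Suc h'" using s cc
    by (auto simp: step_def split: if_splits;
        cases "p ! pc'"; auto split: option.splits)
  ultimately show ?case by simp
qed

lemma run_local: "(\<forall>h<k. o1 h = o2 h) \<Longrightarrow> run p o1 x k = run p o2 x k"
proof (induction k)
  case 0 then show ?case by simp
next
  case (Suc k)
  have eq: "run p o1 x k = run p o2 x k" using Suc by simp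
  show ?case
  proof (cases "run p o1 x k")
    case None then show ?thesis using eq by simp
  next
    case (Some c)
    obtain pc R h where cc: "c = (pc, R, h)" by (cases c)
    have "h \<le> k" using run_head Some cc by blast
    then have oh: "o1 h = o2 h" using Suc.prems by simp
    have "step p o1 c = step p o2 c" using oh cc
      by (auto simp: step_def; cases "p ! pc"; auto)
    then show ?thesis using Some eq by simp
  qed
qed

lemma halts_local:
  assumes "\<forall>h<s. o1 h = o2 h" shows "halts_lt e o1 x s = halts_lt e o2 x s"
proof -
  have "run (prog e) o1 x k = run (prog e) o2 x k" if "k < s" for k
    using assms that by (intro run_local) auto
  then show ?thesis unfolding halts_lt_def by auto
qed

lemma halts_mono: "halts_lt e orc x s \<Longrightarrow> s \<le> s' \<Longrightarrow> halts_lt e orc x s'"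
  unfolding halts_lt_def by (meson less_le_trans)

lemma Pf_Pi:
  assumes "is_prefix_of s Z"
  shows "halts_fin m (take t s) m = halts_inf m Z (min t (length s)) m"
proof -
  have "\<forall>h<min t (length s). fin_oracle (take t s) h = inf_oracle Z h"
    using assms by (auto simp: fin_oracle_def inf_oracle_def is_prefix_of_def)
  then show ?thesis unfolding halts_fin_def halts_inf_def
    using halts_local[of "min t (length s)" "fin_oracle (take t s)" "inf_oracle Z" m m]
    by (simp add: min.commute)
qed

definition PIZ :: "(nat \<Rightarrow> nat) \<Rightarrow> nat \<Rightarrow> nat \<Rightarrow> bool" where
  "PIZ Z = (\<lambda>m t. halts_inf m Z t m)"
definition PFS :: "nat list \<Rightarrow> nat \<Rightarrow> nat \<Rightarrow> bool" where
  "PFS s = (\<lambda>m t. halts_fin m (take t s) m)"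

definition cond :: "(nat \<Rightarrow> nat) \<Rightarrow> nat list \<Rightarrow> nat \<Rightarrow> bool" where
  "cond Z s m \<longleftrightarrow> ((\<exists>t. PIZ Z m t) \<longrightarrow> (LEAST t. PIZ Z m t) \<le> length s)"

lemma condA:
  assumes pre: "is_prefix_of s Z" and c: "cond Z s m"
  shows "(\<exists>t. PFS s m t) = (\<exists>t. PIZ Z m t) \<and> (LEAST t. PFS s m t) = (LEAST t. PIZ Z m t)"
proof -
  have eq: "\<And>t. PFS s m t = PIZ Z m (min t (length s))"
    using Pf_Pi[OF pre] by (simp add: PFS_def PIZ_def)
  show ?thesis
  proof (cases "\<exists>t. PIZ Z m t")
    case True
    define L where "L = (LEAST t. PIZ Z m t)"
    have PL: "PIZ Z m L" using True L_def by (metis LeastI)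
    have Ls: "L \<le> length s" using c True by (simp add: cond_def L_def)
    have "PFS s m L" using eq PL Ls by (simp add: min_def)
    moreover have "\<And>t. t < L \<Longrightarrow> \<not> PFS s m t"
      using eq L_def by (metis min.strict_coboundedI1 not_less_Least)
    ultimately have "(LEAST t. PFS s m t) = L"
      by (metis Least_equality not_le)
    then show ?thesis using True \<open>PFS s m L\<close> L_def by blast
  next
    case False
    then show ?thesis using eq by auto
  qed
qed

lemma tseq_eq:
  assumes pre: "is_prefix_of s Z"
  shows "(\<forall>m<n. cond Z s m) \<Longrightarrow> tseq (PFS s) n = tseq (PIZ Z) n"
proof (induction n)
  case 0 then show ?case by simp
next
  case (Suc n)
  then have IH: "tseq (PFS s) n = tseq (PIZ Z) n" by simp
  have "cond Z s n" using Suc.prems by simp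
  from condA[OF pre this] show ?case using IH by simp
qed

lemma tseq_ge: "tseq P n \<ge> n + 1"
  by (induction n) auto

lemma tseq_suc: "tseq P (Suc n) \<ge> tseq P n + 1"
  by auto

lemma tseq_mono: "i \<le> j \<Longrightarrow> tseq P i \<le> tseq P j"
proof (induction j)
  case 0 then show ?case by simp
next
  case (Suc j)
  then show ?case using tseq_suc[of P j] by (cases "i = Suc j") auto
qed

lemma tseq_least: "\<exists>t. P m t \<Longrightarrow> (LEAST t. P m t) \<le> tseq P (Suc m)"
  by simp

lemma take_init: "is_prefix_of s Z \<Longrightarrow> t \<le> length s \<Longrightarrow> take t s = init_seg Z t"
  by (auto simp: init_seg_def is_prefix_of_def intro!: nth_equalityI)

lemma prefix_init: "is_prefix_of (init_seg Z L) Z"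
  by (simp add: init_seg_def is_prefix_of_def)

lemma tS_eq: "tS s n = tseq (PFS s) (Suc n)"
  by (simp add: tS_def PFS_def)
lemma tZ_eq: "tZ Z n = tseq (PIZ Z) (Suc n)"
  by (simp add: tZ_def PIZ_def)

lemma Jfin_len: "length (Jfin s) = (LEAST k. tS s k > length s)"
  by (simp add: Jfin_def Let_def)

lemma Jfin_nth: "i < length (Jfin s) \<Longrightarrow> Jfin s ! i = str_code (take (tS s i) s)"
  by (simp add: Jfin_def Let_def)

theorem lemma4p5:
  fixes Y Z :: "nat \<Rightarrow> nat"
  shows "Y = JJ Z \<longleftrightarrow>
         (\<forall>n. \<exists>\<sigma>. is_prefix_of \<sigma> Z \<and> length \<sigma> > n \<and> init_seg Y n = Jfin \<sigma>)"
proof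
  assume Y: "Y = JJ Z"
  show "\<forall>n. \<exists>\<sigma>. is_prefix_of \<sigma> Z \<and> length \<sigma> > n \<and> init_seg Y n = Jfin \<sigma>"
  proof
    fix n
    define L where "L = tseq (PIZ Z) n"
    define s where "s = init_seg Z L"
    have pre: "is_prefix_of s Z" by (simp add: s_def prefix_init)
    have ls: "length s = L" by (simp add: s_def init_seg_def)
    have Ln: "L > n" using tseq_ge[of n "PIZ Z"] L_def by simp
    have conds: "cond Z s m" if "m < n" for m
    proof -
      have "tseq (PIZ Z) (Suc m) \<le> L" using tseq_mono[of "Suc m" n] that L_def by simp
      then show ?thesis unfolding cond_def ls using tseq_least[of "PIZ Z" m] le_trans by blast
    qed
    have agree: "tS s i = tZ Z i" if "i < n" for i
      using tseq_eq[OF pre, of "Suc i"] conds that by (simp add: tS_eq tZ_eq)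
    have small: "tS s i \<le> L" if "i < n" for i
      using agree[OF that] tseq_mono[of "Suc i" n "PIZ Z"] that L_def by (simp add: tZ_eq)
    have big: "tS s n > L"
    proof -
      have "tseq (PFS s) n = L" using tseq_eq[OF pre, of n] conds L_def by simp
      then show ?thesis using tseq_suc[of "PFS s" n] by (simp add: tS_eq)
    qed
    have k: "(LEAST k. tS s k > length s) = n"
      using small big ls by (intro Least_equality) (auto simp: not_less[symmetric])
    have "init_seg Y n = Jfin s"
    proof (rule nth_equalityI)
      show "length (init_seg Y n) = length (Jfin s)" using k Jfin_len by (simp add: init_seg_def)
      fix i assume "i < length (init_seg Y n)"
      then have i: "i < n" by (simp add: init_seg_def)
      have "Jfin s ! i = str_code (take (tS s i) s)" using Jfin_nth k Jfin_len i by simp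
      also have "\<dots> = str_code (init_seg Z (tZ Z i))"
        using take_init[OF pre] small[OF i] agree[OF i] ls by simp
      finally show "init_seg Y n ! i = Jfin s ! i" using Y i by (simp add: init_seg_def JJ_def)
    qed
    then show "\<exists>\<sigma>. is_prefix_of \<sigma> Z \<and> length \<sigma> > n \<and> init_seg Y n = Jfin \<sigma>"
      using pre ls Ln by blast
  qed
next
  assume H: "\<forall>n. \<exists>\<sigma>. is_prefix_of \<sigma> Z \<and> length \<sigma> > n \<and> init_seg Y n = Jfin \<sigma>"
  show "Y = JJ Z"
  proof
    fix m
    define f where "f i = (if \<exists>t. PIZ Z i t then LEAST t. PIZ Z i t else 0)" for i
    define N where "N = Suc m + (\<Sum>i\<le>m. f i)"
    obtain s where pre: "is_prefix_of s Z" and ls: "length s > N" and J: "init_seg Y N = Jfin s"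
      using H by blast
    have conds: "cond Z s i" if "i < Suc m" for i
    proof -
      have "f i \<le> (\<Sum>i\<le>m. f i)" using that by (intro member_le_sum) auto
      then show ?thesis using ls unfolding cond_def f_def N_def by (auto split: if_splits)
    qed
    have agree: "tS s m = tZ Z m"
      using tseq_eq[OF pre, of "Suc m"] conds by (simp add: tS_eq tZ_eq)
    have lenJ: "length (Jfin s) = N" using J by (metis length_map length_upt minus_nat.diff_0 init_seg_def)
    have mN: "m < N" by (simp add: N_def)
    have "\<not> tS s m > length s" using lenJ Jfin_len mN by (metis not_less_Least)
    then have small: "tS s m \<le> length s" by simp
    have "Y m = init_seg Y N ! m" using mN by (simp add: init_seg_def)
    also have "\<dots> = str_code (take (tS s m) s)" using J Jfin_nth lenJ mN by simp
    also have "\<dots> = JJ Z m" using take_init[OF pre small] agree by (simp add: JJ_def)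
    finally show "Y m = JJ Z m" .
  qed
qed

end
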